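(* Let $(\mathsf{Proc},\mathsf{Lab},\to,\rightsquigarrow)$ be a combined LTS that admits pre-reversibility. If $\iota_1$ and $\iota_2$ are two independence relations on its transitions such that both resulting LTSIs satisfy SP, BTI and PCI, then the two LTSIs have the same event equivalence $\sim$, the same core independence $\odot$, the same causal ordering $\le$ and the same conflict relation $\#$.
   Context: A combined LTS consists of processes $\mathsf{Proc}$, labels $\mathsf{Lab}$, a forward relation $P\xrightarrow aQ$ and a backward relation $P\rightsquigarrow^aQ$ with $P\xrightarrow aQ$ iff $Q\rightsquigarrow^aP$. A transition is a forward or backward step $t$ with inverse $\bar t$ (the same step in the opposite direction). Transitions are coinitial if they share a source; a path is a finite sequence of transitions each ending where the next starts; a path is rooted if its source cannot perform a backward transition. An LTSI adds an irreflexive symmetric relation $\iota$ on transitions (an independence relation). (SP) if coinitial $t:P\to Q$, $u:P\to R$ with $t\mathrel\iota u$ then there exist $u':Q\to S$ (same label and direction as $u$) and $t':R\to S$ (same label and direction as $t$); (BTI) distinct coinitial backward transitions are independent; (WF) there is no infinite sequence $P_0,P_1,\dots$ with a forward transition $P_{i+1}\to P_i$ for all $i$; (PCI) if $t:P\to Q$, $u:P\to R$, $u':Q\to S$, $t':R\to S$ with $u'$ having the label and direction of $u$, $t'$ those of $t$, and $t\mathrel\iota u$, then $u'\mathrel\iota\bar t$. An LTSI is pre-reversible if it satisfies SP, BTI, WF, PCI; a combined LTS admits pre-reversibility if some independence relation makes it a pre-reversible LTSI. Event equivalence $\sim$ is the smallest equivalence on transitions with $t\sim t'$ whenever $t,u,u',t'$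 form a square as in PCI with $t\mathrel\iota u$; events are $\sim$-classes $[t]$, forward events are classes of forward transitions, $\bar e=[\bar t]$. For a path $r$ and event $e$: $\sharp(\varepsilon,e)=0$, $\sharp(tr,e)=\sharp(r,e)+1$ if $t\in e$, $\sharp(r,e)-1$ if $t\in\bar e$, else $\sharp(r,e)$. Core independence $e\odot e'$: there are coinitial $t\in e$, $t'\in e'$ with $t\mathrel\iota t'$. For forward events: $e\le e'$ iff for all rooted paths $r$, $\sharp(r,e')>0$ implies $\sharp(r,e)>0$; $e\# e'$ iff there is no rooted path $r$ with $\sharp(r,e)>0$ and $\sharp(r,e')>0$. *)

theory Defs
  imports Main
begin

text \<open>A combined LTS is given by its forward relation fwd P a Q (P --a--> Q);
the backward relation is its converse: P ~~a~~> Q iff fwd Q a P.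
A transition records source, direction (True = forward), label and target.\<close>

datatype ('p, 'l) tr = Tr (src: 'p) (fw: bool) (lab: 'l) (tgt: 'p)

type_synonym ('p, 'l) lts = "'p \<Rightarrow> 'l \<Rightarrow> 'p \<Rightarrow> bool"

definition is_tr :: "('p, 'l) lts \<Rightarrow> ('p, 'l) tr \<Rightarrow> bool" where
  "is_tr fwd t = (if fw t then fwd (src t) (lab t) (tgt t) else fwd (tgt t) (lab t) (src t))"

definition inv_tr :: "('p, 'l) tr \<Rightarrow> ('p, 'l) tr" where
  "inv_tr t = Tr (tgt t) (\<not> fw t) (lab t) (src t)"

definition coinitial :: "('p, 'l) tr \<Rightarrow> ('p, 'l) tr \<Rightarrow> bool" where
  "coinitial t u = (src t = src u)"

definition indep_rel :: "('p, 'l) lts \<Rightarrow> (('p, 'l) tr \<Rightarrow> ('p, 'l) tr \<Rightarrow> bool) \<Rightarrow> bool" where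
  "indep_rel fwd \<iota> = ((\<forall>t u. \<iota> t u \<longrightarrow> is_tr fwd t \<and> is_tr fwd u)
                     \<and> (\<forall>t. \<not> \<iota> t t) \<and> (\<forall>t u. \<iota> t u \<longrightarrow> \<iota> u t))"

definition square :: "('p, 'l) lts \<Rightarrow> ('p, 'l) tr \<Rightarrow> ('p, 'l) tr \<Rightarrow> ('p, 'l) tr \<Rightarrow> ('p, 'l) tr \<Rightarrow> bool" where
  "square fwd t u u' t' = (is_tr fwd t \<and> is_tr fwd u \<and> is_tr fwd u' \<and> is_tr fwd t'
     \<and> src t = src u \<and> src u' = tgt t \<and> src t' = tgt u \<and> tgt u' = tgt t'
     \<and> lab u' = lab u \<and> fw u' = fw u \<and> lab t' = lab t \<and> fw t' = fw t)"

definition SP :: "('p, 'l) lts \<Rightarrow> (('p, 'l) tr \<Rightarrow> ('p, 'l) tr \<Rightarrow> bool) \<Rightarrow> bool" where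
  "SP fwd \<iota> = (\<forall>t u. is_tr fwd t \<and> is_tr fwd u \<and> coinitial t u \<and> \<iota> t u
                 \<longrightarrow> (\<exists>u' t'. square fwd t u u' t'))"

definition BTI :: "('p, 'l) lts \<Rightarrow> (('p, 'l) tr \<Rightarrow> ('p, 'l) tr \<Rightarrow> bool) \<Rightarrow> bool" where
  "BTI fwd \<iota> = (\<forall>t u. is_tr fwd t \<and> is_tr fwd u \<and> \<not> fw t \<and> \<not> fw u \<and> coinitial t u \<and> t \<noteq> u
                 \<longrightarrow> \<iota> t u)"

definition WF :: "('p, 'l) lts \<Rightarrow> bool" where
  "WF fwd = (\<not> (\<exists>f :: nat \<Rightarrow> 'p. \<forall>i. \<exists>a. fwd (f (Suc i)) a (f i)))"

definition PCI :: "('p, 'l) lts \<Rightarrow> (('p, 'l) tr \<Rightarrow> ('p, 'l) tr \<Rightarrow> bool) \<Rightarrow> bool" where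
  "PCI fwd \<iota> = (\<forall>t u u' t'. square fwd t u u' t' \<and> \<iota> t u \<longrightarrow> \<iota> u' (inv_tr t))"

definition pre_reversible :: "('p, 'l) lts \<Rightarrow> (('p, 'l) tr \<Rightarrow> ('p, 'l) tr \<Rightarrow> bool) \<Rightarrow> bool" where
  "pre_reversible fwd \<iota> = (indep_rel fwd \<iota> \<and> SP fwd \<iota> \<and> BTI fwd \<iota> \<and> WF fwd \<and> PCI fwd \<iota>)"

definition admits_pre_reversibility :: "('p, 'l) lts \<Rightarrow> bool" where
  "admits_pre_reversibility fwd = (\<exists>\<iota>. pre_reversible fwd \<iota>)"

inductive ev_eq :: "('p, 'l) lts \<Rightarrow> (('p, 'l) tr \<Rightarrow> ('p, 'l) tr \<Rightarrow> bool) \<Rightarrow> ('p, 'l) tr \<Rightarrow> ('p, 'l) tr \<Rightarrow> bool"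
  for fwd \<iota> where
  ev_refl: "is_tr fwd t \<Longrightarrow> ev_eq fwd \<iota> t t"
| ev_sym: "ev_eq fwd \<iota> t u \<Longrightarrow> ev_eq fwd \<iota> u t"
| ev_trans: "ev_eq fwd \<iota> t u \<Longrightarrow> ev_eq fwd \<iota> u v \<Longrightarrow> ev_eq fwd \<iota> t v"
| ev_square: "square fwd t u u' t' \<Longrightarrow> \<iota> t u \<Longrightarrow> ev_eq fwd \<iota> t t'"

definition ev_class :: "('p, 'l) lts \<Rightarrow> (('p, 'l) tr \<Rightarrow> ('p, 'l) tr \<Rightarrow> bool) \<Rightarrow> ('p, 'l) tr \<Rightarrow> ('p, 'l) tr set" where
  "ev_class fwd \<iota> t = {u. ev_eq fwd \<iota> t u}"

definition is_event :: "('p, 'l) lts \<Rightarrow> (('p, 'l) tr \<Rightarrow> ('p, 'l) tr \<Rightarrow> bool) \<Rightarrow> ('p, 'l) tr set \<Rightarrow> bool" where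
  "is_event fwd \<iota> e = (\<exists>t. is_tr fwd t \<and> e = ev_class fwd \<iota> t)"

definition is_fwd_event :: "('p, 'l) lts \<Rightarrow> (('p, 'l) tr \<Rightarrow> ('p, 'l) tr \<Rightarrow> bool) \<Rightarrow> ('p, 'l) tr set \<Rightarrow> bool" where
  "is_fwd_event fwd \<iota> e = (\<exists>t. is_tr fwd t \<and> fw t \<and> e = ev_class fwd \<iota> t)"

definition ev_bar :: "('p, 'l) lts \<Rightarrow> (('p, 'l) tr \<Rightarrow> ('p, 'l) tr \<Rightarrow> bool) \<Rightarrow> ('p, 'l) tr set \<Rightarrow> ('p, 'l) tr set" where
  "ev_bar fwd \<iota> e = (\<Union>t\<in>e. ev_class fwd \<iota> (inv_tr t))"

fun is_path :: "('p, 'l) lts \<Rightarrow> 'p \<Rightarrow> ('p, 'l) tr list \<Rightarrow> bool" where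
  "is_path fwd P [] = True"
| "is_path fwd P (t # r) = (is_tr fwd t \<and> src t = P \<and> is_path fwd (tgt t) r)"

definition rooted_path :: "('p, 'l) lts \<Rightarrow> 'p \<Rightarrow> ('p, 'l) tr list \<Rightarrow> bool" where
  "rooted_path fwd P r = (is_path fwd P r \<and> \<not> (\<exists>a Q. fwd Q a P))"

fun occ :: "('p, 'l) lts \<Rightarrow> (('p, 'l) tr \<Rightarrow> ('p, 'l) tr \<Rightarrow> bool) \<Rightarrow> ('p, 'l) tr list \<Rightarrow> ('p, 'l) tr set \<Rightarrow> int" where
  "occ fwd \<iota> [] e = 0"
| "occ fwd \<iota> (t # r) e = (if t \<in> e then occ fwd \<iota> r e + 1
                          else if t \<in> ev_bar fwd \<iota> e then occ fwd \<iota> r e - 1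
                          else occ fwd \<iota> r e)"

definition core_indep :: "(('p, 'l) tr \<Rightarrow> ('p, 'l) tr \<Rightarrow> bool) \<Rightarrow> ('p, 'l) tr set \<Rightarrow> ('p, 'l) tr set \<Rightarrow> bool" where
  "core_indep \<iota> e e' = (\<exists>t t'. t \<in> e \<and> t' \<in> e' \<and> coinitial t t' \<and> \<iota> t t')"

definition causes :: "('p, 'l) lts \<Rightarrow> (('p, 'l) tr \<Rightarrow> ('p, 'l) tr \<Rightarrow> bool) \<Rightarrow> ('p, 'l) tr set \<Rightarrow> ('p, 'l) tr set \<Rightarrow> bool" where
  "causes fwd \<iota> e e' = (\<forall>P r. rooted_path fwd P r \<longrightarrow> occ fwd \<iota> r e' > 0 \<longrightarrow> occ fwd \<iota> r e > 0)"

definition conflict :: "('p, 'l) lts \<Rightarrow> (('p, 'l) tr \<Rightarrow> ('p, 'l) tr \<Rightarrow> bool) \<Rightarrow> ('p, 'l) tr set \<Rightarrow> ('p, 'l) tr set \<Rightarrow> bool" where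
  "conflict fwd \<iota> e e' = (\<not> (\<exists>P r. rooted_path fwd P r \<and> occ fwd \<iota> r e > 0 \<and> occ fwd \<iota> r e' > 0))"

end

theory Submission
  imports Defs
begin

lemma is_tr_inv[simp]: "is_tr fwd (inv_tr t) = is_tr fwd t"
  by (simp add: is_tr_def inv_tr_def)

lemma inv_inv[simp]: "inv_tr (inv_tr t) = t"
  by (cases t) (simp add: inv_tr_def)

lemma inv_sel[simp]: "src (inv_tr t) = tgt t" "tgt (inv_tr t) = src t" "fw (inv_tr t) = (\<not> fw t)"
  "lab (inv_tr t) = lab t"
  by (simp_all add: inv_tr_def)

lemma tr_eq: "(x = y) = (src x = src y \<and> fw x = fw y \<and> lab x = lab y \<and> tgt x = tgt y)"
  by (cases x; cases y) auto

lemma sq_flip: "square fwd t u u' t' \<Longrightarrow> square fwd (inv_tr u) t' t (inv_tr u')"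
  by (auto simp: square_def)

lemma sq_back: "square fwd t u u' t' \<Longrightarrow> square fwd (inv_tr t') (inv_tr u') (inv_tr u) (inv_tr t)"
  by (auto simp: square_def)

lemma sq_sym: "square fwd t u u' t' \<Longrightarrow> square fwd u t t' u'"
  by (auto simp: square_def)

lemma back_step:
  assumes "PCI fwd \<iota>" "square fwd t u u' t'" "\<iota> (inv_tr u) t'"
  shows "\<iota> t u"
  using assms sq_flip[OF assms(2)] unfolding PCI_def by force

lemma fwd_case:
  assumes "BTI fwd \<iota>" "PCI fwd \<iota>" "square fwd t u u' t'" "fw t" "fw u" "t \<noteq> u"
  shows "\<iota> t u"
proof -
  have d: "inv_tr t' \<noteq> inv_tr u'"
    using assms(3-6) by (auto simp: square_def tr_eq)
  have "\<iota> (inv_tr t') (inv_tr u')"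
    using assms(1,3,4,5) d unfolding BTI_def square_def coinitial_def by auto
  then have "\<iota> (inv_tr u) t'"
    using assms(2) sq_back[OF assms(3)] unfolding PCI_def by force
  then show ?thesis using back_step assms(2,3) by blast
qed

lemma char:
  assumes "indep_rel fwd \<iota>" "SP fwd \<iota>" "BTI fwd \<iota>" "PCI fwd \<iota>"
    "coinitial t u" "is_tr fwd t" "is_tr fwd u"
  shows "\<iota> t u \<longleftrightarrow> (t \<noteq> u \<and> (\<exists>u' t'. square fwd t u u' t' \<and> u' \<noteq> inv_tr t))"
proof
  assume h: "\<iota> t u"
  then obtain u' t' where s: "square fwd t u u' t'" using assms(2,5-7) unfolding SP_def by blast
  then have "\<iota> u' (inv_tr t)" using assms(4) h unfolding PCI_def by blast
  then have "u' \<noteq> inv_tr t" using assms(1) unfolding indep_rel_def by metis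
  moreover have "t \<noteq> u" using h assms(1) unfolding indep_rel_def by metis
  ultimately show "t \<noteq> u \<and> (\<exists>u' t'. square fwd t u u' t' \<and> u' \<noteq> inv_tr t)" using s by blast
next
  assume "t \<noteq> u \<and> (\<exists>u' t'. square fwd t u u' t' \<and> u' \<noteq> inv_tr t)"
  then obtain u' t' where ne: "t \<noteq> u" and s: "square fwd t u u' t'" and n: "u' \<noteq> inv_tr t" by blast
  have n2: "t' \<noteq> inv_tr u" using s n by (auto simp: square_def tr_eq)
  consider "fw t" "fw u" | "fw t" "\<not> fw u" | "\<not> fw t" "fw u" | "\<not> fw t" "\<not> fw u" by blast
  then show "\<iota> t u"
  proof cases
    case 1 then show ?thesis using fwd_case assms(3,4) s ne by blast
  next
    case 2
    have "\<iota> (inv_tr u) t'"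
      using fwd_case[OF assms(3,4) sq_flip[OF s]] 2 s n2 by (auto simp: square_def)
    then show ?thesis using back_step assms(4) s by blast
  next
    case 3
    have n3: "u' \<noteq> inv_tr t" using n .
    have "\<iota> (inv_tr t) u'"
      using fwd_case[OF assms(3,4) sq_flip[OF sq_sym[OF s]]] 3 s n3 by (auto simp: square_def)
    then have "\<iota> u t" using back_step assms(4) sq_sym[OF s] by blast
    then show ?thesis using assms(1) unfolding indep_rel_def by blast
  next
    case 4 then show ?thesis using assms(3,5-7) ne unfolding BTI_def by blast
  qed
qed

lemma ev_mono:
  assumes "\<And>t u. coinitial t u \<Longrightarrow> is_tr fwd t \<Longrightarrow> is_tr fwd u \<Longrightarrow> \<iota>1 t u \<Longrightarrow> \<iota>2 t u"
  shows "ev_eq fwd \<iota>1 t u \<Longrightarrow> ev_eq fwd \<iota>2 t u"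
proof (induction rule: ev_eq.induct)
  case (ev_square t u u' t')
  then have "\<iota>2 t u" using assms by (auto simp: square_def coinitial_def)
  then show ?case using ev_square ev_eq.ev_square by blast
qed (auto intro: ev_eq.intros)

theorem proposition5p12:
  fixes fwd :: "'p \<Rightarrow> 'l \<Rightarrow> 'p \<Rightarrow> bool"
    and \<iota>1 \<iota>2 :: "('p, 'l) tr \<Rightarrow> ('p, 'l) tr \<Rightarrow> bool"
  assumes "admits_pre_reversibility fwd"
    and "indep_rel fwd \<iota>1" and "SP fwd \<iota>1" and "BTI fwd \<iota>1" and "PCI fwd \<iota>1"
    and "indep_rel fwd \<iota>2" and "SP fwd \<iota>2" and "BTI fwd \<iota>2" and "PCI fwd \<iota>2"
  shows "ev_eq fwd \<iota>1 = ev_eq fwd \<iota>2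
    \<and> (\<forall>e e'. is_event fwd \<iota>1 e \<and> is_event fwd \<iota>1 e' \<longrightarrow> (core_indep \<iota>1 e e' \<longleftrightarrow> core_indep \<iota>2 e e'))
    \<and> (\<forall>e e'. is_fwd_event fwd \<iota>1 e \<and> is_fwd_event fwd \<iota>1 e' \<longrightarrow> (causes fwd \<iota>1 e e' \<longleftrightarrow> causes fwd \<iota>2 e e'))
    \<and> (\<forall>e e'. is_fwd_event fwd \<iota>1 e \<and> is_fwd_event fwd \<iota>1 e' \<longrightarrow> (conflict fwd \<iota>1 e e' \<longleftrightarrow> conflict fwd \<iota>2 e e'))"
proof -
  have eqi: "\<iota>1 t u = \<iota>2 t u" if "coinitial t u" "is_tr fwd t" "is_tr fwd u" for t u
    using char[OF assms(2-5) that] char[OF assms(6-9) that] by simp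
  have eqi': "\<iota>1 t u = \<iota>2 t u" if "coinitial t u" for t u
  proof -
    have "\<iota>1 t u \<Longrightarrow> is_tr fwd t \<and> is_tr fwd u" using assms(2) unfolding indep_rel_def by blast
    moreover have "\<iota>2 t u \<Longrightarrow> is_tr fwd t \<and> is_tr fwd u" using assms(6) unfolding indep_rel_def by blast
    ultimately show ?thesis using eqi that by blast
  qed
  have E: "ev_eq fwd \<iota>1 = ev_eq fwd \<iota>2"
  proof (intro ext iffI)
    fix t u
    show "ev_eq fwd \<iota>1 t u \<Longrightarrow> ev_eq fwd \<iota>2 t u" by (erule ev_mono[rotated]) (use eqi in blast)
    show "ev_eq fwd \<iota>2 t u \<Longrightarrow> ev_eq fwd \<iota>1 t u" by (erule ev_mono[rotated]) (use eqi in blast)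
  qed
  have C: "ev_class fwd \<iota>1 = ev_class fwd \<iota>2" using E by (intro ext) (simp add: ev_class_def)
  have B: "ev_bar fwd \<iota>1 = ev_bar fwd \<iota>2" using C by (intro ext) (simp add: ev_bar_def)
  have O: "occ fwd \<iota>1 r e = occ fwd \<iota>2 r e" for r e
    by (induction r) (simp_all add: B)
  have CI: "core_indep \<iota>1 e e' = core_indep \<iota>2 e e'" for e e'
    unfolding core_indep_def using eqi' by blast
  show ?thesis using E CI O by (simp add: causes_def conflict_def)
qed

end
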